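(* Let $L$ be a finite-dimensional pure, nonnilpotent, solvable Lie algebra over $\mathbb{C}$ of breadth $2$ such that $\dim[L,L]=2$ and $\dim L^k=2$ for all integers $k\geq 2$. Then the following are equivalent: (1) $C_L([L,L])\neq\{0\}$; (2) $[L,L]$ is an abelian ideal of $L$; (3) $[L,L]\subseteq C_L([L,L])$.
   Context: For $x\in L$, $b(x)=\mathrm{rank}(\mathrm{ad}_x)$ and the breadth of $L$ is $b(L)=\max\{b(x)\mid x\in L\}$. $L$ is pure if it has no abelian ideal as a direct summand; equivalently $Z(L)\subseteq[L,L]$, where $Z(L)$ is the center. The lower central series is indexed by $L^0=L$, $L^1=[L,L]$, $L^k=[L,L^{k-1}]$ for $k\geq 2$. $C_L(S)$ denotes the centralizer of a subset $S$ in $L$. *)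

theory Defs
  imports Complex_Main
begin

text \<open>A complex Lie algebra: the underlying space is the whole type 'a, a complex
vector space via the scalar multiplication sc, with bracket br.\<close>

definition lie_algebra :: "(complex \<Rightarrow> 'a::ab_group_add \<Rightarrow> 'a) \<Rightarrow> ('a \<Rightarrow> 'a \<Rightarrow> 'a) \<Rightarrow> bool" where
  "lie_algebra sc br \<longleftrightarrow>
     vector_space sc
     \<and> (\<forall>x. Vector_Spaces.linear sc sc (br x))
     \<and> (\<forall>y. Vector_Spaces.linear sc sc (\<lambda>x. br x y))
     \<and> (\<forall>x. br x x = 0)
     \<and> (\<forall>x y z. br x (br y z) + br y (br z x) + br z (br x y) = 0)"

definition fin_dim :: "(complex \<Rightarrow> 'a::ab_group_add \<Rightarrow> 'a) \<Rightarrow> bool" where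
  "fin_dim sc \<longleftrightarrow> (\<exists>B. finite B \<and> module.span sc B = UNIV)"

definition brset :: "(complex \<Rightarrow> 'a::ab_group_add \<Rightarrow> 'a) \<Rightarrow> ('a \<Rightarrow> 'a \<Rightarrow> 'a) \<Rightarrow> 'a set \<Rightarrow> 'a set \<Rightarrow> 'a set" where
  "brset sc br A B = module.span sc {br a b | a b. a \<in> A \<and> b \<in> B}"

definition derived :: "(complex \<Rightarrow> 'a::ab_group_add \<Rightarrow> 'a) \<Rightarrow> ('a \<Rightarrow> 'a \<Rightarrow> 'a) \<Rightarrow> 'a set" where
  "derived sc br = brset sc br UNIV UNIV"

text \<open>Lower central series: L^0 = L, L^1 = [L,L], L^k = [L, L^(k-1)].\<close>
fun lcs :: "(complex \<Rightarrow> 'a::ab_group_add \<Rightarrow> 'a) \<Rightarrow> ('a \<Rightarrow> 'a \<Rightarrow> 'a) \<Rightarrow> nat \<Rightarrow> 'a set" where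
  "lcs sc br 0 = UNIV"
| "lcs sc br (Suc k) = brset sc br UNIV (lcs sc br k)"

fun dser :: "(complex \<Rightarrow> 'a::ab_group_add \<Rightarrow> 'a) \<Rightarrow> ('a \<Rightarrow> 'a \<Rightarrow> 'a) \<Rightarrow> nat \<Rightarrow> 'a set" where
  "dser sc br 0 = UNIV"
| "dser sc br (Suc k) = brset sc br (dser sc br k) (dser sc br k)"

definition nilpotent_lie :: "(complex \<Rightarrow> 'a::ab_group_add \<Rightarrow> 'a) \<Rightarrow> ('a \<Rightarrow> 'a \<Rightarrow> 'a) \<Rightarrow> bool" where
  "nilpotent_lie sc br \<longleftrightarrow> (\<exists>k. lcs sc br k = {0})"

definition solvable_lie :: "(complex \<Rightarrow> 'a::ab_group_add \<Rightarrow> 'a) \<Rightarrow> ('a \<Rightarrow> 'a \<Rightarrow> 'a) \<Rightarrow> bool" where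
  "solvable_lie sc br \<longleftrightarrow> (\<exists>k. dser sc br k = {0})"

definition centralizer :: "('a \<Rightarrow> 'a \<Rightarrow> 'a::ab_group_add) \<Rightarrow> 'a set \<Rightarrow> 'a set" where
  "centralizer br S = {x. \<forall>s\<in>S. br x s = 0}"

definition center :: "('a \<Rightarrow> 'a \<Rightarrow> 'a::ab_group_add) \<Rightarrow> 'a set" where
  "center br = centralizer br UNIV"

text \<open>Pure: Z(L) contained in [L,L] (the equivalent characterization given in the paper).\<close>
definition pure_lie :: "(complex \<Rightarrow> 'a::ab_group_add \<Rightarrow> 'a) \<Rightarrow> ('a \<Rightarrow> 'a \<Rightarrow> 'a) \<Rightarrow> bool" where
  "pure_lie sc br \<longleftrightarrow> center br \<subseteq> derived sc br"

definition breadth_elt :: "(complex \<Rightarrow> 'a::ab_group_add \<Rightarrow> 'a) \<Rightarrow> ('a \<Rightarrow> 'a \<Rightarrow> 'a) \<Rightarrow> 'a \<Rightarrow> nat" where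
  "breadth_elt sc br x = vector_space.dim sc (range (br x))"

definition breadth :: "(complex \<Rightarrow> 'a::ab_group_add \<Rightarrow> 'a) \<Rightarrow> ('a \<Rightarrow> 'a \<Rightarrow> 'a) \<Rightarrow> nat" where
  "breadth sc br = Max (range (breadth_elt sc br))"

definition lie_ideal :: "(complex \<Rightarrow> 'a::ab_group_add \<Rightarrow> 'a) \<Rightarrow> ('a \<Rightarrow> 'a \<Rightarrow> 'a) \<Rightarrow> 'a set \<Rightarrow> bool" where
  "lie_ideal sc br I \<longleftrightarrow> module.subspace sc I \<and> (\<forall>x y. y \<in> I \<longrightarrow> br x y \<in> I)"

definition abelian_ideal :: "(complex \<Rightarrow> 'a::ab_group_add \<Rightarrow> 'a) \<Rightarrow> ('a \<Rightarrow> 'a \<Rightarrow> 'a) \<Rightarrow> 'a set \<Rightarrow> bool" where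
  "abelian_ideal sc br I \<longleftrightarrow> lie_ideal sc br I \<and> (\<forall>x\<in>I. \<forall>y\<in>I. br x y = 0)"

end

theory Submission
  imports Defs
begin

locale lie_alg = vector_space scale for scale :: "complex \<Rightarrow> 'a::ab_group_add \<Rightarrow> 'a" +
  fixes br :: "'a \<Rightarrow> 'a \<Rightarrow> 'a"
  assumes lin_r: "\<And>x. Vector_Spaces.linear scale scale (br x)"
    and lin_l: "\<And>y. Vector_Spaces.linear scale scale (\<lambda>x. br x y)"
    and alt: "\<And>x. br x x = 0"
    and jac: "\<And>x y z. br x (br y z) + br y (br z x) + br z (br x y) = 0"
begin

lemma mh_r: "module_hom scale scale (br x)"
  using lin_r[of x] by (simp add: module_hom_iff_linear)
lemma mh_l: "module_hom scale scale (\<lambda>x. br x y)"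
  using lin_l[of y] by (simp add: module_hom_iff_linear)

lemma add_r: "br x (a + b) = br x a + br x b"
  using module_hom.add[OF mh_r] by blast
lemma scale_r: "br x (scale c a) = scale c (br x a)"
  using module_hom.scale[OF mh_r] by blast
lemma add_l: "br (a + b) w = br a w + br b w"
  using module_hom.add[OF mh_l[of w]] by blast
lemma scale_l: "br (scale c a) w = scale c (br a w)"
  using module_hom.scale[OF mh_l[of w]] by blast

lemma zero_r: "br x 0 = 0"
  by (metis add_r add_cancel_right_right)
lemma zero_l: "br 0 y = 0"
  by (metis add_l add_cancel_right_right)

lemma neg_r: "br x (- a) = - br x a"
proof -
  have "br x (- a) + br x a = 0" using add_r[of x "- a" a] zero_r[of x] by simp
  then show ?thesis by (simp add: eq_neg_iff_add_eq_0)
qed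

lemma anti: "br x y = - br y x"
proof -
  have "0 = br (x + y) (x + y)" by (simp add: alt)
  also have "\<dots> = br x x + br x y + (br y x + br y y)" unfolding add_l add_r by (simp add: add.assoc)
  also have "\<dots> = br x y + br y x" by (simp add: alt)
  finally have "0 = br x y + br y x" .
  then show ?thesis by (metis eq_neg_iff_add_eq_0)
qed

lemma key:
  assumes "dim (span {br a b | a b. a \<in> UNIV \<and> b \<in> UNIV}) = 2"
  shows "\<forall>u\<in>span {br a b | a b. a \<in> UNIV \<and> b \<in> UNIV}.
           \<forall>v\<in>span {br a b | a b. a \<in> UNIV \<and> b \<in> UNIV}. br u v = 0"
proof -
  define D where "D = span {br a b | a b. a \<in> UNIV \<and> b \<in> UNIV}"
  have brD: "\<And>a b. br a b \<in> D" unfolding D_def by (rule span_base) blast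
  obtain B where B: "B \<subseteq> D" "independent B" "D \<subseteq> span B" "card B = dim D"
    using basis_exists by blast
  then obtain e1 e2 where e: "B = {e1, e2}" "e1 \<noteq> e2"
    using assms unfolding D_def by (metis card_2_iff)
  have coords: "\<exists>a b. u = scale a e1 + scale b e2" if "u \<in> D" for u
  proof -
    have "u \<in> span {e1, e2}" using B e that by blast
    then obtain k where "u - scale k e1 \<in> span {e2}" by (auto simp: span_insert)
    then obtain l where "u - scale k e1 = scale l e2" by (auto simp: span_singleton)
    then have "u = scale k e1 + scale l e2" by (simp add: algebra_simps)
    then show ?thesis by blast
  qed
  define y where "y = br e1 e2"
  have yD: "y \<in> D" unfolding y_def by (rule brD)
  have y21: "br e2 e1 = - y" unfolding y_def by (rule anti)
  have eig: "\<exists>t. br z y = scale t y" for z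
  proof -
    obtain a b where ab: "br z e1 = scale a e1 + scale b e2" using coords[OF brD] by blast
    obtain c d where cd: "br z e2 = scale c e1 + scale d e2" using coords[OF brD] by blast
    have j: "br z (br e1 e2) + br e1 (br e2 z) + br e2 (br z e1) = 0" by (rule jac)
    have j1: "br e1 (br e2 z) = - br e1 (br z e2)" by (subst anti[of e2 z]) (rule neg_r)
    have j2: "br e2 (br z e1) = - br (br z e1) e2" by (rule anti)
    have "br z y = br (br z e1) e2 + br e1 (br z e2)"
    proof -
      have "br z y + - br e1 (br z e2) + - br (br z e1) e2 = 0" using j unfolding j1 j2 y_def .
      then show ?thesis by (simp add: algebra_simps)
    qed
    also have "\<dots> = scale a y + scale d y"
      unfolding ab cd by (simp add: add_l add_r scale_l scale_r alt y_def)
    also have "\<dots> = scale (a + d) y" by (simp add: scale_left_distrib)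
    finally show ?thesis by blast
  qed
  have brk: "br (br a b) y = 0" for a b
  proof -
    obtain p where p: "br a y = scale p y" using eig by blast
    obtain q where q: "br b y = scale q y" using eig by blast
    have j: "br y (br a b) + br a (br b y) + br b (br y a) = 0" by (rule jac)
    have "br y a = - scale p y" using anti[of y a] p by simp
    then have "br b (br y a) = - scale p (scale q y)"
      by (simp add: neg_r scale_r q)
    moreover have "br a (br b y) = scale q (scale p y)" by (simp add: q p scale_r)
    ultimately have "br y (br a b) = 0" using j by (simp add: scale_scale mult.commute)
    then show ?thesis using anti[of "br a b" y] by simp
  qed
  have Dy: "br w y = 0" if "w \<in> D" for w
  proof -
    have "subspace {w. br w y = 0}"
      by (auto simp: subspace_def zero_l add_l scale_l)
    moreover have "{br a b | a b. a \<in> UNIV \<and> b \<in> UNIV} \<subseteq> {w. br w y = 0}" using brk by blast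
    ultimately have "D \<subseteq> {w. br w y = 0}" unfolding D_def by (rule span_minimal[rotated])
    then show ?thesis using that by blast
  qed
  have e1D: "e1 \<in> D" and e2D: "e2 \<in> D" using B e by auto
  have y0: "y = 0"
  proof (rule ccontr)
    assume ny: "y \<noteq> 0"
    obtain g1 g2 where g: "y = scale g1 e1 + scale g2 e2" using coords[OF yD] by blast
    have "br e1 y = br e1 (scale g1 e1 + scale g2 e2)" by (rule arg_cong[OF g])
    also have "\<dots> = scale g2 y" by (simp add: add_r scale_r alt y_def)
    finally have "br e1 y = scale g2 y" .
    then have "g2 = 0" using Dy[OF e1D] ny by simp
    have "br e2 y = br e2 (scale g1 e1 + scale g2 e2)" by (rule arg_cong[OF g])
    also have "\<dots> = - scale g1 y" by (simp add: add_r scale_r alt y21)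
    finally have "br e2 y = - scale g1 y" .
    then have "g1 = 0" using Dy[OF e2D] ny by simp
    with \<open>g2 = 0\<close> g ny show False by simp
  qed
  show ?thesis unfolding D_def[symmetric]
  proof (intro ballI)
    fix u v assume "u \<in> D" "v \<in> D"
    then obtain a1 a2 b1 b2 where "u = scale a1 e1 + scale a2 e2" "v = scale b1 e1 + scale b2 e2"
      using coords by blast
    then show "br u v = 0"
      using y0 y21 by (simp add: add_r add_l scale_r scale_l alt y_def)
  qed
qed

end

theorem proposition3p6:
  fixes sc :: "complex \<Rightarrow> 'a::ab_group_add \<Rightarrow> 'a" and br :: "'a \<Rightarrow> 'a \<Rightarrow> 'a"
  assumes "lie_algebra sc br"
    and "fin_dim sc"
    and "pure_lie sc br"
    and "\<not> nilpotent_lie sc br"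
    and "solvable_lie sc br"
    and "breadth sc br = 2"
    and "vector_space.dim sc (derived sc br) = 2"
    and "\<forall>k\<ge>2. vector_space.dim sc (lcs sc br k) = 2"
  shows "(centralizer br (derived sc br) \<noteq> {0} \<longleftrightarrow> abelian_ideal sc br (derived sc br))
       \<and> (abelian_ideal sc br (derived sc br) \<longleftrightarrow> derived sc br \<subseteq> centralizer br (derived sc br))"
proof -
  have "lie_alg sc br"
    using assms(1) unfolding lie_algebra_def lie_alg_def lie_alg_axioms_def by auto
  then interpret lie_alg sc br .
  let ?D = "derived sc br"
  have Ddef: "?D = span {br a b | a b. a \<in> UNIV \<and> b \<in> UNIV}"
    unfolding derived_def brset_def by simp
  have ab: "\<forall>u\<in>?D. \<forall>v\<in>?D. br u v = 0"
    using key assms(7) unfolding Ddef by blast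
  have brD: "br a b \<in> ?D" for a b unfolding Ddef by (rule span_base) blast
  have id: "abelian_ideal sc br ?D"
    unfolding abelian_ideal_def lie_ideal_def using ab brD Ddef by auto
  have sub: "?D \<subseteq> centralizer br ?D"
    unfolding centralizer_def using ab by blast
  have "\<not> ?D \<subseteq> {0}"
  proof
    assume "?D \<subseteq> {0}"
    moreover have "0 \<in> ?D" unfolding Ddef by (rule span_zero)
    ultimately have "?D = span {}" unfolding span_empty by auto
    then have "dim ?D = 0" by (intro dim_unique[of "{}"]) (auto simp: span_empty independent_empty)
    then show False using assms(7) by simp
  qed
  then have "centralizer br ?D \<noteq> {0}" using sub by blast
  then show ?thesis using id sub by blast
qed

end
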